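(* Let $X$ be a finite connected simplicial complex and $\delta$ a cellular perversity, with $\ge$ denoting the order of $\Lambda(X,\delta)$. (a) If $\Delta\leftrightarrow\Delta'$ and $\delta(\Delta)\ge\delta(\Delta')$, then $\Delta\ge\Delta'$; moreover a defining sequence $\Delta=\Delta_0,\dots,\Delta_r=\Delta'$ can be chosen with $\Delta\leftrightarrow\Delta_i\leftrightarrow\Delta'$ for all $i$. (b) If $\Delta\ge\Delta'$ and either $\delta(\Delta)\ge\delta(\Delta')\ge0$ or $0\ge\delta(\Delta)\ge\delta(\Delta')$, then $\Delta\leftrightarrow\Delta'$. (c) If $\Delta>\Delta'$ and $\Delta$, $\Delta'$ are not incident, then $\delta(\Delta)>0$ and $\delta(\Delta')<0$; if moreover $\delta(\Delta)-\delta(\Delta')=2$, then $\delta(\Delta)=1$ and $\delta(\Delta')=-1$.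
   Context: Simplices of $X$ are open; $\Delta\leftrightarrow\Delta'$ (incident) means one is a face of the other. A cellular perversity is $\delta:\mathbb Z_{\ge0}\to\mathbb Z$ with $\delta(0)=0$ mapping every $\{0,\dots,k\}$ bijectively onto an interval $\{a,\dots,a+k\}$, $a\le0$; $\delta(\Delta):=\delta(\dim\Delta)$. $\Lambda(X,\delta)$ is the set of simplices of $X$ ordered by: $\Delta\ge\Delta'$ iff there is a sequence $\Delta=\Delta_0,\Delta_1,\dots,\Delta_r=\Delta'$ ($r\ge0$) with $\Delta_i\leftrightarrow\Delta_{i+1}$ and $\delta(\Delta_i)=\delta(\Delta_{i+1})+1$ for all $0\le i\le r-1$. *)

theory Defs
  imports Main
begin

definition simplicial_complex :: "'v set set \<Rightarrow> bool" where
  "simplicial_complex X \<longleftrightarrow>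
     (\<forall>s\<in>X. finite s \<and> s \<noteq> {}) \<and>
     (\<forall>s\<in>X. \<forall>t. t \<subseteq> s \<and> t \<noteq> {} \<longrightarrow> t \<in> X)"

definition finite_complex :: "'v set set \<Rightarrow> bool" where
  "finite_complex X \<longleftrightarrow> simplicial_complex X \<and> finite X"

definition connected_complex :: "'v set set \<Rightarrow> bool" where
  "connected_complex X \<longleftrightarrow> X \<noteq> {} \<and>
     (\<forall>u\<in>\<Union>X. \<forall>v\<in>\<Union>X. (\<lambda>a b. {a, b} \<in> X)\<^sup>*\<^sup>* u v)"

definition sdim :: "'v set \<Rightarrow> nat" where
  "sdim s = card s - 1"

definition incident :: "'v set \<Rightarrow> 'v set \<Rightarrow> bool" where
  "incident s t \<longleftrightarrow> s \<subseteq> t \<or> t \<subseteq> s"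

definition cellular_perversity :: "(nat \<Rightarrow> int) \<Rightarrow> bool" where
  "cellular_perversity \<delta> \<longleftrightarrow> \<delta> 0 = 0 \<and>
     (\<forall>k. \<exists>a\<le>0. bij_betw \<delta> {0..k} {a..a + int k})"

definition pval :: "(nat \<Rightarrow> int) \<Rightarrow> 'v set \<Rightarrow> int" where
  "pval \<delta> s = \<delta> (sdim s)"

definition lam_chain :: "'v set set \<Rightarrow> (nat \<Rightarrow> int) \<Rightarrow> 'v set list \<Rightarrow> bool" where
  "lam_chain X \<delta> xs \<longleftrightarrow> xs \<noteq> [] \<and> set xs \<subseteq> X \<and>
     (\<forall>i. Suc i < length xs \<longrightarrow>
        incident (xs ! i) (xs ! Suc i) \<and> pval \<delta> (xs ! i) = pval \<delta> (xs ! Suc i) + 1)"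

definition lam_ge :: "'v set set \<Rightarrow> (nat \<Rightarrow> int) \<Rightarrow> 'v set \<Rightarrow> 'v set \<Rightarrow> bool" where
  "lam_ge X \<delta> s t \<longleftrightarrow> (\<exists>xs. lam_chain X \<delta> xs \<and> hd xs = s \<and> last xs = t)"

definition lam_gt :: "'v set set \<Rightarrow> (nat \<Rightarrow> int) \<Rightarrow> 'v set \<Rightarrow> 'v set \<Rightarrow> bool" where
  "lam_gt X \<delta> s t \<longleftrightarrow> lam_ge X \<delta> s t \<and> s \<noteq> t"

end

theory Submission
  imports Defs
begin

lemma perv_inj:
  assumes "cellular_perversity \<delta>" "\<delta> j = \<delta> k" shows "j = k"
proof -
  obtain a where "bij_betw \<delta> {0..max j k} {a..a + int (max j k)}"
    using assms(1) unfolding cellular_perversity_def by blast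
  then have "inj_on \<delta> {0..max j k}" by (simp add: bij_betw_def)
  then show ?thesis using assms(2) by (auto dest: inj_onD)
qed

lemma perv_surj:
  assumes "cellular_perversity \<delta>" "j \<le> K" "k \<le> K" "\<delta> k \<le> v" "v \<le> \<delta> j"
  shows "\<exists>d\<le>K. \<delta> d = v"
proof -
  obtain a where b: "bij_betw \<delta> {0..K} {a..a + int K}"
    using assms(1) unfolding cellular_perversity_def by blast
  then have im: "\<delta> ` {0..K} = {a..a + int K}" by (simp add: bij_betw_def)
  have "\<delta> j \<in> {a..a + int K}" "\<delta> k \<in> {a..a + int K}" using im assms(2,3) by auto
  then have "v \<in> \<delta> ` {0..K}" using im assms(4,5) by auto
  then show ?thesis by auto
qed

lemma perv_between:
  assumes "cellular_perversity \<delta>" "min 0 (\<delta> j) \<le> \<delta> k" "\<delta> k \<le> max 0 (\<delta> j)"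
  shows "k \<le> j"
proof (rule ccontr)
  assume "\<not> k \<le> j"
  then obtain m where m: "k = Suc m" "j \<le> m" by (cases k) auto
  have d0: "\<delta> 0 = 0" using assms(1) unfolding cellular_perversity_def by blast
  have "\<exists>d\<le>m. \<delta> d = \<delta> k"
  proof (cases "\<delta> j \<ge> 0")
    case True
    then show ?thesis using perv_surj[OF assms(1), of j m 0 "\<delta> k"] assms m d0 by auto
  next
    case False
    then show ?thesis using perv_surj[OF assms(1), of 0 m j "\<delta> k"] assms m d0 by auto
  qed
  then obtain d where "d \<le> m" "\<delta> d = \<delta> k" by blast
  then show False using perv_inj[OF assms(1)] m by fastforce
qed

lemma flag:
  assumes "finite B" "A \<subseteq> B" "A \<noteq> {}"
  shows "\<exists>F. (\<forall>d. F d \<subseteq> B) \<and> (\<forall>d<card B. card (F d) = Suc d)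
           \<and> (\<forall>d e. incident (F d) (F e)) \<and> F (card A - 1) = A \<and> F (card B - 1) = B"
proof -
  have fA: "finite A" using assms finite_subset by blast
  obtain la where la: "set la = A" "distinct la" using finite_distinct_list[OF fA] by blast
  obtain lb where lb: "set lb = B - A" "distinct lb" using finite_distinct_list[of "B - A"] assms by blast
  define L where "L = la @ lb"
  have L: "distinct L" "set L = B" using la lb assms(2) unfolding L_def by auto
  have lenL: "length L = card B" using L distinct_card by fastforce
  have lenA: "length la = card A" using la distinct_card by fastforce
  have cA: "card A \<ge> 1" using fA assms(3) by (simp add: Suc_leI card_gt_0_iff)
  define F where "F d = set (take (Suc d) L)" for d
  have "\<forall>d. F d \<subseteq> B" unfolding F_def using L set_take_subset by metis
  moreover have "\<forall>d<card B. card (F d) = Suc d"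
    unfolding F_def using L lenL by (simp add: distinct_card)
  moreover have "\<forall>d e. incident (F d) (F e)"
    unfolding F_def incident_def
    by (metis nat_le_linear set_take_subset_set_take Suc_le_mono)
  moreover have "F (card A - 1) = A" unfolding F_def L_def using cA lenA la by simp
  moreover have "F (card B - 1) = B"
  proof -
    have "card B \<ge> card A" using card_mono[OF assms(1,2)] .
    then have "Suc (card B - 1) = length L" using cA lenL by simp
    then show ?thesis unfolding F_def using L by simp
  qed
  ultimately show ?thesis by blast
qed


lemma sc_facts:
  assumes "finite_complex X" "s \<in> X"
  shows "finite s" "s \<noteq> {}" "card s \<ge> 1" "\<And>t. t \<subseteq> s \<Longrightarrow> t \<noteq> {} \<Longrightarrow> t \<in> X"
proof -
  have sc: "simplicial_complex X" using assms(1) unfolding finite_complex_def by blast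
  show f: "finite s" and n: "s \<noteq> {}" using sc assms(2) unfolding simplicial_complex_def by blast+
  show "card s \<ge> 1" using f n by (simp add: Suc_leI card_gt_0_iff)
  show "\<And>t. t \<subseteq> s \<Longrightarrow> t \<noteq> {} \<Longrightarrow> t \<in> X"
    using sc assms(2) unfolding simplicial_complex_def by blast
qed

lemma partA:
  assumes X: "finite_complex X" and P: "cellular_perversity \<delta>"
    and st: "s \<in> X" "t \<in> X" "incident s t" "pval \<delta> s \<ge> pval \<delta> t"
  shows "\<exists>xs. lam_chain X \<delta> xs \<and> hd xs = s \<and> last xs = t \<and>
                  (\<forall>u\<in>set xs. incident s u \<and> incident u t)"
proof -
  define B where "B = s \<union> t"
  define A where "A = s \<inter> t"
  have BX: "B \<in> X" and AX: "A \<in> X" and AB: "A \<subseteq> B"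
    and sF0: "s = A \<and> t = B \<or> s = B \<and> t = A"
  proof -
    have "s \<subseteq> t \<or> t \<subseteq> s" using st(3) unfolding incident_def .
    then have "(A = s \<and> B = t) \<or> (A = t \<and> B = s)" unfolding A_def B_def by blast
    then have h: "(A = s \<and> B = t) \<or> (A = t \<and> B = s)" .
    show "B \<in> X" using h st(1,2) by blast
    show "A \<in> X" using h st(1,2) by blast
    show "A \<subseteq> B" unfolding A_def B_def by blast
    show "s = A \<and> t = B \<or> s = B \<and> t = A" using h by blast
  qed
  note fB = sc_facts[OF X BX]
  note fA = sc_facts[OF X AX]
  obtain F where F: "\<forall>d. F d \<subseteq> B" "\<forall>d<card B. card (F d) = Suc d"
     "\<forall>d e. incident (F d) (F e)" "F (card A - 1) = A" "F (card B - 1) = B"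
    using flag[OF fB(1) AB fA(2)] by blast
  have FX: "F d \<in> X" and Fdim: "sdim (F d) = d" if "d < card B" for d
  proof -
    have "card (F d) = Suc d" using F(2) that by blast
    then have "F d \<noteq> {}" by auto
    then show "F d \<in> X" using fB(4) F(1) by blast
    show "sdim (F d) = d" using \<open>card (F d) = Suc d\<close> by (simp add: sdim_def)
  qed
  have sF: "F (sdim s) = s" and tF: "F (sdim t) = t"
    using sF0 F(4,5) unfolding sdim_def by auto
  have cB: "card A \<le> card B" using card_mono[OF fB(1) AB] .
  have sB: "sdim s \<le> card B - 1" "sdim t \<le> card B - 1"
    using sF0 cB unfolding sdim_def by auto
  define n where "n = nat (pval \<delta> s - pval \<delta> t)"
  have ex: "\<exists>d\<le>card B - 1. \<delta> d = pval \<delta> s - int i" if "i \<le> n" for i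
    using perv_surj[OF P sB(1) sB(2), of "pval \<delta> s - int i"] that st(4)
    unfolding n_def pval_def by auto
  define dd where "dd i = (SOME d. d \<le> card B - 1 \<and> \<delta> d = pval \<delta> s - int i)" for i
  have dd: "dd i \<le> card B - 1" "\<delta> (dd i) = pval \<delta> s - int i" if "i \<le> n" for i
    using someI_ex[OF ex[OF that]] unfolding dd_def by auto
  have ddlt: "dd i < card B" if "i \<le> n" for i using dd(1)[OF that] fB(3) by linarith
  have pv: "pval \<delta> (F (dd i)) = pval \<delta> s - int i" if "i \<le> n" for i
    using Fdim[OF ddlt[OF that]] dd(2)[OF that] by (simp add: pval_def)
  have dd0: "dd 0 = sdim s"
  proof (rule perv_inj[OF P])
    show "\<delta> (dd 0) = \<delta> (sdim s)" using dd(2)[of 0] by (simp add: pval_def)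
  qed
  have ddn: "dd n = sdim t"
  proof (rule perv_inj[OF P])
    show "\<delta> (dd n) = \<delta> (sdim t)" using dd(2)[of n] st(4) by (simp add: pval_def n_def)
  qed
  define xs where "xs = map (\<lambda>i. F (dd i)) [0..<Suc n]"
  have "lam_chain X \<delta> xs"
    unfolding lam_chain_def
  proof (intro conjI allI impI)
    show "xs \<noteq> []" unfolding xs_def by simp
    show "set xs \<subseteq> X" unfolding xs_def using FX ddlt by auto
  next
    fix i assume "Suc i < length xs"
    then have i: "Suc i \<le> n" unfolding xs_def by simp
    have "xs ! i = F (dd i)" "xs ! Suc i = F (dd (Suc i))"
      unfolding xs_def using i by (simp_all del: upt_Suc add: nth_map_upt)
    then show "incident (xs ! i) (xs ! Suc i)" using F(3) by simp
    show "pval \<delta> (xs ! i) = pval \<delta> (xs ! Suc i) + 1"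
      using \<open>xs ! i = _\<close> \<open>xs ! Suc i = _\<close> pv[of i] pv[OF i] i by simp
  qed
  moreover have "hd xs = s" unfolding xs_def using dd0 sF by (simp add: hd_map del: upt_Suc)
  moreover have "last xs = t" unfolding xs_def using ddn tF by (simp add: last_map del: upt_Suc)
  moreover have "\<forall>u\<in>set xs. incident s u \<and> incident u t"
  proof
    fix u assume "u \<in> set xs"
    then obtain i where "u = F (dd i)" unfolding xs_def by auto
    then show "incident s u \<and> incident u t" using F(3) sF tF by metis
  qed
  ultimately show ?thesis by blast
qed


lemma step_sub:
  assumes P: "cellular_perversity \<delta>" and fin: "finite a" "finite b" "a \<noteq> {}" "b \<noteq> {}"
    and inc: "incident a b" and pv: "pval \<delta> a = pval \<delta> b + 1"
  shows "(pval \<delta> b \<ge> 0 \<longrightarrow> b \<subseteq> a) \<and> (pval \<delta> a \<le> 0 \<longrightarrow> a \<subseteq> b)"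
proof (intro conjI impI)
  have ca: "card a \<ge> 1" and cb: "card b \<ge> 1" using fin by (auto simp: Suc_leI card_gt_0_iff)
  have ne: "sdim a \<noteq> sdim b" using pv unfolding pval_def by auto
  {
    assume h: "pval \<delta> b \<ge> 0"
    have "sdim b \<le> sdim a"
      using perv_between[OF P, of "sdim a" "sdim b"] h pv unfolding pval_def by auto
    then have "card b < card a" using ne ca cb unfolding sdim_def by auto
    then show "b \<subseteq> a" using inc card_mono[OF fin(2), of a] unfolding incident_def by auto
  }
  {
    assume h: "pval \<delta> a \<le> 0"
    have "sdim a \<le> sdim b"
      using perv_between[OF P, of "sdim b" "sdim a"] h pv unfolding pval_def by auto
    then have "card a < card b" using ne ca cb unfolding sdim_def by auto
    then show "a \<subseteq> b" using inc card_mono[OF fin(1), of b] unfolding incident_def by auto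
  }
qed

lemma chain_pval:
  assumes "lam_chain X \<delta> xs" "i < length xs"
  shows "pval \<delta> (xs ! i) = pval \<delta> (xs ! 0) - int i"
  using assms(2)
proof (induction i)
  case 0 then show ?case by simp
next
  case (Suc i)
  then show ?case using assms(1) unfolding lam_chain_def by force
qed

lemma partB:
  assumes X: "finite_complex X" and P: "cellular_perversity \<delta>"
    and ch: "lam_chain X \<delta> xs"
    and c: "pval \<delta> (hd xs) \<ge> pval \<delta> (last xs) \<and> pval \<delta> (last xs) \<ge> 0 \<or>
            0 \<ge> pval \<delta> (hd xs) \<and> pval \<delta> (hd xs) \<ge> pval \<delta> (last xs)"
  shows "incident (hd xs) (last xs)"
proof -
  have ne: "xs \<noteq> []" and sub: "set xs \<subseteq> X" using ch unfolding lam_chain_def by auto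
  have hd: "hd xs = xs ! 0" using ne by (simp add: hd_conv_nth)
  have lst: "last xs = xs ! (length xs - 1)" using ne by (simp add: last_conv_nth)
  have mem: "\<And>i. i < length xs \<Longrightarrow> finite (xs ! i) \<and> xs ! i \<noteq> {}"
    using sub sc_facts[OF X] by (meson nth_mem subsetD)
  have pvl: "pval \<delta> (last xs) = pval \<delta> (xs ! 0) - int (length xs - 1)"
    using chain_pval[OF ch, of "length xs - 1"] ne lst by simp
  have stp: "\<And>j. Suc j < length xs \<Longrightarrow>
     (pval \<delta> (xs ! Suc j) \<ge> 0 \<longrightarrow> xs ! Suc j \<subseteq> xs ! j) \<and> (pval \<delta> (xs ! j) \<le> 0 \<longrightarrow> xs ! j \<subseteq> xs ! Suc j)"
    using step_sub[OF P] mem ch unfolding lam_chain_def by (meson Suc_lessD)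
  from c show ?thesis
  proof
    assume h: "pval \<delta> (hd xs) \<ge> pval \<delta> (last xs) \<and> pval \<delta> (last xs) \<ge> 0"
    have "j < length xs \<longrightarrow> xs ! j \<subseteq> xs ! 0" for j
    proof (induction j)
      case 0 then show ?case by simp
    next
      case (Suc j)
      show ?case
      proof
        assume j: "Suc j < length xs"
        have "pval \<delta> (xs ! Suc j) \<ge> 0" using chain_pval[OF ch j] h pvl hd j by simp
        then show "xs ! Suc j \<subseteq> xs ! 0" using stp[OF j] Suc j by auto
      qed
    qed
    then show ?thesis using hd lst ne unfolding incident_def by simp
  next
    assume h: "0 \<ge> pval \<delta> (hd xs) \<and> pval \<delta> (hd xs) \<ge> pval \<delta> (last xs)"
    have "j < length xs \<longrightarrow> xs ! 0 \<subseteq> xs ! j" for j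
    proof (induction j)
      case 0 then show ?case by simp
    next
      case (Suc j)
      show ?case
      proof
        assume j: "Suc j < length xs"
        have "pval \<delta> (xs ! j) \<le> 0" using chain_pval[OF ch, of j] h hd j by simp
        then show "xs ! 0 \<subseteq> xs ! Suc j" using stp[OF j] Suc j by auto
      qed
    qed
    then show ?thesis using hd lst ne unfolding incident_def by simp
  qed
qed

lemma chain_ge:
  assumes "lam_chain X \<delta> xs" shows "pval \<delta> (hd xs) \<ge> pval \<delta> (last xs)"
proof -
  have ne: "xs \<noteq> []" using assms unfolding lam_chain_def by auto
  then show ?thesis using chain_pval[OF assms, of "length xs - 1"]
    by (simp add: hd_conv_nth last_conv_nth)
qed

theorem lemma1p2p3:
  fixes X :: "'v set set" and \<delta> :: "nat \<Rightarrow> int"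
  assumes "finite_complex X" and "connected_complex X" and "cellular_perversity \<delta>"
  shows "(\<forall>s\<in>X. \<forall>t\<in>X. incident s t \<and> pval \<delta> s \<ge> pval \<delta> t \<longrightarrow>
            lam_ge X \<delta> s t \<and>
            (\<exists>xs. lam_chain X \<delta> xs \<and> hd xs = s \<and> last xs = t \<and>
                  (\<forall>u\<in>set xs. incident s u \<and> incident u t)))
       \<and> (\<forall>s\<in>X. \<forall>t\<in>X. lam_ge X \<delta> s t \<and>
            (pval \<delta> s \<ge> pval \<delta> t \<and> pval \<delta> t \<ge> 0 \<or> 0 \<ge> pval \<delta> s \<and> pval \<delta> s \<ge> pval \<delta> t)
            \<longrightarrow> incident s t)
       \<and> (\<forall>s\<in>X. \<forall>t\<in>X. lam_gt X \<delta> s t \<and> \<not> incident s t \<longrightarrow>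
            pval \<delta> s > 0 \<and> pval \<delta> t < 0 \<and>
            (pval \<delta> s - pval \<delta> t = 2 \<longrightarrow> pval \<delta> s = 1 \<and> pval \<delta> t = -1))"
proof (intro conjI ballI impI)
  fix s t assume "s \<in> X" "t \<in> X" "incident s t \<and> pval \<delta> s \<ge> pval \<delta> t"
  then have "\<exists>xs. lam_chain X \<delta> xs \<and> hd xs = s \<and> last xs = t \<and>
                  (\<forall>u\<in>set xs. incident s u \<and> incident u t)"
    using partA[OF assms(1) assms(3)] by blast
  then show "lam_ge X \<delta> s t" unfolding lam_ge_def by blast
  show "\<exists>xs. lam_chain X \<delta> xs \<and> hd xs = s \<and> last xs = t \<and>
                  (\<forall>u\<in>set xs. incident s u \<and> incident u t)" by fact
next
  fix s t assume "s \<in> X" "t \<in> X" and h: "lam_ge X \<delta> s t \<and>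
            (pval \<delta> s \<ge> pval \<delta> t \<and> pval \<delta> t \<ge> 0 \<or> 0 \<ge> pval \<delta> s \<and> pval \<delta> s \<ge> pval \<delta> t)"
  then obtain xs where "lam_chain X \<delta> xs" "hd xs = s" "last xs = t" unfolding lam_ge_def by blast
  then show "incident s t" using partB[OF assms(1) assms(3)] h by blast
next
  fix s t assume "s \<in> X" "t \<in> X" and h: "lam_gt X \<delta> s t \<and> \<not> incident s t"
  then obtain xs where xs: "lam_chain X \<delta> xs" "hd xs = s" "last xs = t"
    unfolding lam_gt_def lam_ge_def by blast
  have ge: "pval \<delta> s \<ge> pval \<delta> t" using chain_ge[OF xs(1)] xs by simp
  have "\<not> (pval \<delta> t \<ge> 0)" using partB[OF assms(1) assms(3) xs(1)] xs h ge by auto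
  moreover have "\<not> (pval \<delta> s \<le> 0)" using partB[OF assms(1) assms(3) xs(1)] xs h ge by auto
  ultimately show "pval \<delta> s > 0" "pval \<delta> t < 0" by auto
  assume "pval \<delta> s - pval \<delta> t = 2"
  with \<open>\<not> (pval \<delta> t \<ge> 0)\<close> \<open>\<not> (pval \<delta> s \<le> 0)\<close>
  show "pval \<delta> s = 1" "pval \<delta> t = -1" by auto
qed

end
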